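(* In the interpolating system described in the context, for every $t\in[0,1]$ and $u\ge0$, the distributions $\mathbb P_{m_1}(x)=\mathbb E\langle\delta(x-m_1)\rangle_{t,u}$ and $\mathbb P_{q_{12}}(x)=\mathbb E\langle\delta(x-q_{12})\rangle_{t,u}$ are equal. In particular $\mathbb E\langle m_1\rangle_{t,u}=\mathbb E\langle q_{12}\rangle_{t,u}$.
   Context: Let $K,N$ with $K/N=\beta$, $B(t),\lambda(t)\ge0$ for $t\in[0,1]$. Random data: $n\in\mathbb R^N$, $w,h\in\mathbb R^K$ with i.i.d. $\mathcal N(0,1)$ entries, $N\times K$ matrix $s$ with i.i.d. $\mathcal N(0,1)$ entries, all independent; $\mathbb E$ is expectation over them. For $x\in\{\pm1\}^K$, $z=\mathbf 1-x$ and $h_u(x)=\sqrt u\sum_kh_kx_k+u\sum_kx_k-\sqrt u\sum_k|h_k|$. Gibbs measure $p_{t,u}(x)\propto\exp\bigl(-\frac12\|n+N^{-1/2}B(t)^{1/2}sz\|^2-\frac12\|w+\lambda(t)^{1/2}z\|^2+h_u(x)\bigr)$ on $\{\pm1\}^K$. $\langle\cdot\rangle_{t,u}$ denotes average under $p_{t,u}$, and for functions of two configurations $x^{(1)},x^{(2)}$ ("replicas") it denotes average under the product measure $p_{t,u}(x^{(1)})p_{t,u}(x^{(2)})$ (same realization of $n,w,h,s$). $m_1=\frac1K\sum_k x_k$, $q_{12}=\frac1K\sum_k x^{(1)}_kx^{(2)}_k$. *)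

theory Defs
  imports "HOL-Probability.Probability"
begin

text \<open>Indices of the Gaussian random data: n_i (i<N), w_k, h_k (k<K), s_ik (i<N, k<K).\<close>
datatype gidx = Nn nat | Ww nat | Hh nat | Ss nat nat

definition gidx_set :: "nat \<Rightarrow> nat \<Rightarrow> gidx set" where
  "gidx_set K N = Nn ` {..<N} \<union> Ww ` {..<K} \<union> Hh ` {..<K} \<union> (\<lambda>(i,k). Ss i k) ` ({..<N} \<times> {..<K})"

definition data_space :: "nat \<Rightarrow> nat \<Rightarrow> (gidx \<Rightarrow> real) measure" where
  "data_space K N = PiM (gidx_set K N) (\<lambda>_. density lborel std_normal_density)"

definition spins :: "nat \<Rightarrow> (nat \<Rightarrow> real) set" where
  "spins K = PiE {..<K} (\<lambda>_. {-1, 1})"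

definition h_u :: "nat \<Rightarrow> real \<Rightarrow> (gidx \<Rightarrow> real) \<Rightarrow> (nat \<Rightarrow> real) \<Rightarrow> real" where
  "h_u K u \<omega> x = sqrt u * (\<Sum>k<K. \<omega> (Hh k) * x k) + u * (\<Sum>k<K. x k)
      - sqrt u * (\<Sum>k<K. \<bar>\<omega> (Hh k)\<bar>)"

text \<open>Exponent of the (unnormalized) Gibbs weight, with z = 1 - x.\<close>
definition hamil :: "nat \<Rightarrow> nat \<Rightarrow> (real \<Rightarrow> real) \<Rightarrow> (real \<Rightarrow> real) \<Rightarrow> real \<Rightarrow> real
    \<Rightarrow> (gidx \<Rightarrow> real) \<Rightarrow> (nat \<Rightarrow> real) \<Rightarrow> real" where
  "hamil K N B lam t u \<omega> x =
     - (1/2) * (\<Sum>i<N. (\<omega> (Nn i) + sqrt (B t) / sqrt (real N) * (\<Sum>k<K. \<omega> (Ss i k) * (1 - x k)))\<^sup>2)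
     - (1/2) * (\<Sum>k<K. (\<omega> (Ww k) + sqrt (lam t) * (1 - x k))\<^sup>2)
     + h_u K u \<omega> x"

definition gibbs_weight where
  "gibbs_weight K N B lam t u \<omega> x = exp (hamil K N B lam t u \<omega> x)"

definition partition_fn where
  "partition_fn K N B lam t u \<omega> = (\<Sum>x\<in>spins K. gibbs_weight K N B lam t u \<omega> x)"

definition gibbs_avg1 :: "nat \<Rightarrow> nat \<Rightarrow> (real \<Rightarrow> real) \<Rightarrow> (real \<Rightarrow> real) \<Rightarrow> real \<Rightarrow> real
    \<Rightarrow> (gidx \<Rightarrow> real) \<Rightarrow> ((nat \<Rightarrow> real) \<Rightarrow> real) \<Rightarrow> real" where
  "gibbs_avg1 K N B lam t u \<omega> f =
     (\<Sum>x\<in>spins K. gibbs_weight K N B lam t u \<omega> x * f x) / partition_fn K N B lam t u \<omega>"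

definition gibbs_avg2 :: "nat \<Rightarrow> nat \<Rightarrow> (real \<Rightarrow> real) \<Rightarrow> (real \<Rightarrow> real) \<Rightarrow> real \<Rightarrow> real
    \<Rightarrow> (gidx \<Rightarrow> real) \<Rightarrow> ((nat \<Rightarrow> real) \<Rightarrow> (nat \<Rightarrow> real) \<Rightarrow> real) \<Rightarrow> real" where
  "gibbs_avg2 K N B lam t u \<omega> f =
     (\<Sum>x1\<in>spins K. \<Sum>x2\<in>spins K.
        gibbs_weight K N B lam t u \<omega> x1 * gibbs_weight K N B lam t u \<omega> x2 * f x1 x2)
     / (partition_fn K N B lam t u \<omega>)\<^sup>2"

definition magn :: "nat \<Rightarrow> (nat \<Rightarrow> real) \<Rightarrow> real" where
  "magn K x = (1 / real K) * (\<Sum>k<K. x k)"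

definition overlap :: "nat \<Rightarrow> (nat \<Rightarrow> real) \<Rightarrow> (nat \<Rightarrow> real) \<Rightarrow> real" where
  "overlap K x1 x2 = (1 / real K) * (\<Sum>k<K. x1 k * x2 k)"

end

theory Submission
  imports Defs
begin


abbreviation Gs :: "real measure" where "Gs \<equiv> density lborel std_normal_density"

definition rho :: "real \<Rightarrow> real \<Rightarrow> real" where "rho a y = exp (a*y - a^2/2)"

lemma sets_Gs[simp, measurable_cong]: "sets Gs = sets borel" by simp

lemma std_dens_shift: assumes "b*b = 1"
  shows "std_normal_density (a + b*x) * rho a (a + b*x) = std_normal_density x"
proof -
  have e: "(a + b*x)\<^sup>2 = a^2 + 2*a*b*x + (b*b)*x^2" by (simp add: power2_eq_square algebra_simps)
  have "- (a + b*x)\<^sup>2 / 2 + (a*(a + b*x) - a^2/2) = - x\<^sup>2/2"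
    unfolding e using assms by (simp add: field_simps power2_eq_square)
  then show ?thesis unfolding std_normal_density_def rho_def
    by (simp add: exp_add[symmetric] mult.assoc)
qed

lemma distr_Gs_affine:
  assumes b: "b = 1 \<or> b = -1"
  shows "distr Gs Gs (\<lambda>y. a + b*y) = density Gs (\<lambda>y. ennreal (rho a y))"
proof (rule measure_eqI)
  show "sets (distr Gs Gs (\<lambda>y. a + b*y)) = sets (density Gs (\<lambda>y. ennreal (rho a y)))" by simp
  fix A assume A: "A \<in> sets (distr Gs Gs (\<lambda>y. a + b*y))"
  then have [measurable]: "A \<in> sets borel" by simp
  have bb: "b*b = 1" "b \<noteq> 0" using b by auto
  have "emeasure (distr Gs Gs (\<lambda>y. a + b*y)) A = (\<integral>\<^sup>+ y. indicator A (a + b*y) \<partial>Gs)"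
  proof -
    have "emeasure (distr Gs Gs (\<lambda>y. a + b*y)) A = (\<integral>\<^sup>+ y. indicator A y \<partial>distr Gs Gs (\<lambda>y. a + b*y))"
      using A by (rule nn_integral_indicator[symmetric])
    also have "\<dots> = (\<integral>\<^sup>+ y. indicator A (a + b*y) \<partial>Gs)"
      by (rule nn_integral_distr) auto
    finally show ?thesis .
  qed
  also have "\<dots> = (\<integral>\<^sup>+ y. ennreal (std_normal_density y) * indicator A (a + b*y) \<partial>lborel)"
    by (simp add: nn_integral_density)
  also have "\<dots> = (\<integral>\<^sup>+ y. ennreal (std_normal_density (a + b*y)) * (ennreal (rho a (a + b*y)) * indicator A (a + b*y)) \<partial>lborel)"
    by (intro nn_integral_cong) (simp add: ennreal_mult'[symmetric] mult.assoc[symmetric] std_dens_shift[OF bb(1)] rho_def[symmetric])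
  also have "\<dots> = (\<integral>\<^sup>+ y. ennreal (std_normal_density y) * (ennreal (rho a y) * indicator A y) \<partial>lborel)"
    using nn_integral_real_affine[of "\<lambda>y. ennreal (std_normal_density y) * (ennreal (rho a y) * indicator A y)" b a] bb b
    by (auto simp: rho_def)
  also have "\<dots> = emeasure (density Gs (\<lambda>y. ennreal (rho a y))) A"
    by (simp add: emeasure_density nn_integral_density rho_def)
  finally show "emeasure (distr Gs Gs (\<lambda>y. a + b*y)) A = emeasure (density Gs (\<lambda>y. ennreal (rho a y))) A" .
qed



lemma prob_space_Gs: "prob_space Gs" by (rule prob_space_normal_density) simp

lemma PP_Gs: "product_prob_space (\<lambda>_. Gs)"
  by (intro product_prob_spaceI prob_space_Gs)

lemma meas_Gs_eq[simp]: "measurable M Gs = measurable M borel" "measurable Gs N = measurable borel N"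
  by (rule measurable_cong_sets; simp)+

lemma comp_meas: "i \<in> I \<Longrightarrow> (\<lambda>\<omega>. \<omega> i) \<in> borel_measurable (PiM I (\<lambda>_. Gs))"
  using measurable_component_singleton[of i I "\<lambda>_. Gs"] by simp

lemma prob_space_distr_Gs: "prob_space (distr Gs Gs f)" if "f \<in> borel_measurable borel"
  using that by (intro prob_space.prob_space_distr[OF prob_space_Gs]) simp

lemma meas_aff: "(\<lambda>\<omega>. \<lambda>i\<in>I. a i + b i * \<omega> i) \<in> PiM I (\<lambda>_. Gs) \<rightarrow>\<^sub>M PiM I (\<lambda>_. Gs)"
proof (rule measurable_restrict)
  fix i assume "i \<in> I"
  then show "(\<lambda>\<omega>. a i + b i * \<omega> i) \<in> PiM I (\<lambda>_. Gs) \<rightarrow>\<^sub>M Gs"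
    using comp_meas[of i I] by simp
qed
lemma distr_PiM_affine:
  assumes I: "finite I" and b: "\<And>i. b i = 1 \<or> b i = -1"
  shows "distr (PiM I (\<lambda>_. Gs)) (PiM I (\<lambda>_. Gs)) (\<lambda>\<omega>. \<lambda>i\<in>I. a i + b i * \<omega> i)
       = PiM I (\<lambda>i. distr Gs Gs (\<lambda>y. a i + b i * y))" (is "?L = ?R")
proof -
  interpret PG: product_prob_space "\<lambda>_. Gs" by (rule PP_Gs)
  interpret PD: product_prob_space "\<lambda>i. distr Gs Gs (\<lambda>y. a i + b i * y)"
    by (intro product_prob_spaceI prob_space_distr_Gs) auto
  note meas = meas_aff[where I=I and a=a and b=b]
  show ?thesis
  proof (rule PD.PiM_eqI[OF I])
    show "sets ?L = sets ?R" by (simp only: sets_distr) (intro sets_PiM_cong refl; simp)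
    fix A assume A: "\<And>i. i \<in> I \<Longrightarrow> A i \<in> sets (distr Gs Gs (\<lambda>y. a i + b i * y))"
    have A': "\<And>i. i \<in> I \<Longrightarrow> A i \<in> sets borel" using A by auto
    have "emeasure ?L (PiE I A) = emeasure (PiM I (\<lambda>_. Gs)) ((\<lambda>\<omega>. \<lambda>i\<in>I. a i + b i * \<omega> i) -` PiE I A \<inter> space (PiM I (\<lambda>_. Gs)))"
      using A' by (intro emeasure_distr meas) (auto intro!: sets_PiM_I_finite I)
    also have "(\<lambda>\<omega>. \<lambda>i\<in>I. a i + b i * \<omega> i) -` PiE I A \<inter> space (PiM I (\<lambda>_. Gs))
             = PiE I (\<lambda>i. (\<lambda>y. a i + b i * y) -` A i \<inter> space Gs)"
      by (auto simp: space_PiM PiE_def Pi_def extensional_def)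
    also have "emeasure (PiM I (\<lambda>_. Gs)) \<dots> = (\<Prod>i\<in>I. emeasure Gs ((\<lambda>y. a i + b i * y) -` A i \<inter> space Gs))"
      using A' by (intro PG.emeasure_PiM I) (auto intro!: measurable_sets_borel[where M=borel])
    also have "\<dots> = (\<Prod>i\<in>I. emeasure (distr Gs Gs (\<lambda>y. a i + b i * y)) (A i))"
      using A' by (intro prod.cong refl emeasure_distr[symmetric]) auto
    finally show "emeasure ?L (PiE I A) = (\<Prod>i\<in>I. emeasure (distr Gs Gs (\<lambda>y. a i + b i * y)) (A i))" .
  qed
qed

lemma PiM_density_Gs:
  assumes I: "finite I" and b: "\<And>i. b i = 1 \<or> b i = -1"
  shows "density (PiM I (\<lambda>_. Gs)) (\<lambda>\<omega>. \<Prod>i\<in>I. ennreal (rho (a i) (\<omega> i)))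
       = PiM I (\<lambda>i. distr Gs Gs (\<lambda>y. a i + b i * y))" (is "?L = ?R")
proof -
  interpret PG: product_prob_space "\<lambda>_. Gs" by (rule PP_Gs)
  interpret PD: product_prob_space "\<lambda>i. distr Gs Gs (\<lambda>y. a i + b i * y)"
    by (intro product_prob_spaceI prob_space_distr_Gs) auto
  have rm[measurable]: "rho c \<in> borel_measurable borel" for c unfolding rho_def by measurable
  show ?thesis
  proof (rule PD.PiM_eqI[OF I])
    show "sets ?L = sets ?R" by (simp only: sets_density) (intro sets_PiM_cong refl; simp)
    fix A assume A: "\<And>i. i \<in> I \<Longrightarrow> A i \<in> sets (distr Gs Gs (\<lambda>y. a i + b i * y))"
    have A': "\<And>i. i \<in> I \<Longrightarrow> A i \<in> sets borel" using A by auto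
    have PA: "PiE I A \<in> sets (PiM I (\<lambda>_. Gs))"
      using A' by (auto intro!: sets_PiM_I_finite I)
    have "emeasure ?L (PiE I A) = (\<integral>\<^sup>+\<omega>. (\<Prod>i\<in>I. ennreal (rho (a i) (\<omega> i))) * indicator (PiE I A) \<omega> \<partial>PiM I (\<lambda>_. Gs))"
      using PA by (subst emeasure_density) (auto intro!: borel_measurable_prod_ennreal measurable_compose[OF comp_meas rm])
    also have "\<dots> = (\<integral>\<^sup>+\<omega>. (\<Prod>i\<in>I. ennreal (rho (a i) (\<omega> i)) * indicator (A i) (\<omega> i)) \<partial>PiM I (\<lambda>_. Gs))"
    proof (intro nn_integral_cong)
      fix \<omega> assume "\<omega> \<in> space (PiM I (\<lambda>_. Gs))"
      then have ext: "\<omega> \<in> extensional I" by (auto simp: space_PiM PiE_def)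
      have "indicator (PiE I A) \<omega> = (\<Prod>i\<in>I. indicator (A i) (\<omega> i) :: ennreal)"
        using ext I by (auto simp: indicator_def PiE_def Pi_def prod_zero_iff)
      then show "(\<Prod>i\<in>I. ennreal (rho (a i) (\<omega> i))) * indicator (PiE I A) \<omega> = (\<Prod>i\<in>I. ennreal (rho (a i) (\<omega> i)) * indicator (A i) (\<omega> i))"
        by (simp add: prod.distrib)
    qed
    also have "\<dots> = (\<Prod>i\<in>I. \<integral>\<^sup>+y. ennreal (rho (a i) y) * indicator (A i) y \<partial>Gs)"
      using A' by (intro PG.product_nn_integral_prod I) auto
    also have "\<dots> = (\<Prod>i\<in>I. emeasure (distr Gs Gs (\<lambda>y. a i + b i * y)) (A i))"
      using A' by (intro prod.cong refl) (simp add: distr_Gs_affine[OF b] emeasure_density)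
    finally show "emeasure ?L (PiE I A) = (\<Prod>i\<in>I. emeasure (distr Gs Gs (\<lambda>y. a i + b i * y)) (A i))" .
  qed
qed

lemma L1_meas:
  assumes I: "finite I" and b: "\<And>i. b i = 1 \<or> b i = -1"
  shows "distr (PiM I (\<lambda>_. Gs)) (PiM I (\<lambda>_. Gs)) (\<lambda>\<omega>. \<lambda>i\<in>I. a i + b i * \<omega> i)
       = density (PiM I (\<lambda>_. Gs)) (\<lambda>\<omega>. \<Prod>i\<in>I. ennreal (rho (a i) (\<omega> i)))"
  using distr_PiM_affine[OF assms] PiM_density_Gs[OF assms] by simp

lemma L1_nn:
  assumes I: "finite I" and b: "\<And>i. b i = 1 \<or> b i = -1"
    and H[measurable]: "H \<in> borel_measurable (PiM I (\<lambda>_. Gs))"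
  shows "(\<integral>\<^sup>+\<omega>. H (\<lambda>i\<in>I. a i + b i * \<omega> i) \<partial>PiM I (\<lambda>_. Gs))
       = (\<integral>\<^sup>+\<omega>. (\<Prod>i\<in>I. ennreal (rho (a i) (\<omega> i))) * H \<omega> \<partial>PiM I (\<lambda>_. Gs))"
proof -
  have rm[measurable]: "rho c \<in> borel_measurable borel" for c unfolding rho_def by measurable
  note meas = meas_aff[where I=I and a=a and b=b]
  have "(\<integral>\<^sup>+\<omega>. H (\<lambda>i\<in>I. a i + b i * \<omega> i) \<partial>PiM I (\<lambda>_. Gs))
      = (\<integral>\<^sup>+\<omega>. H \<omega> \<partial>distr (PiM I (\<lambda>_. Gs)) (PiM I (\<lambda>_. Gs)) (\<lambda>\<omega>. \<lambda>i\<in>I. a i + b i * \<omega> i))"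
    by (rule nn_integral_distr[symmetric, OF meas]) simp
  also have "\<dots> = (\<integral>\<^sup>+\<omega>. (\<Prod>i\<in>I. ennreal (rho (a i) (\<omega> i))) * H \<omega> \<partial>PiM I (\<lambda>_. Gs))"
    unfolding L1_meas[OF assms(1,2)]
    by (rule nn_integral_density) (auto intro!: borel_measurable_prod_ennreal measurable_compose[OF comp_meas rm])
  finally show ?thesis .
qed



lemma rho_meas[measurable]: "rho c \<in> borel_measurable borel" unfolding rho_def by measurable


lemma shear_nn:
  fixes R NS :: "'i set" and \<alpha> :: "'i \<Rightarrow> ('i \<Rightarrow> real) \<Rightarrow> real"
  assumes fin: "finite R" "finite NS" and disj: "R \<inter> NS = {}"
    and loc: "\<And>j \<omega>. j \<in> NS \<Longrightarrow> \<alpha> j \<omega> = \<alpha> j (restrict \<omega> R)"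
    and am[measurable]: "\<And>j. j \<in> NS \<Longrightarrow> \<alpha> j \<in> borel_measurable (PiM (R \<union> NS) (\<lambda>_. Gs))"
    and H[measurable]: "H \<in> borel_measurable (PiM (R \<union> NS) (\<lambda>_. Gs))"
  shows "(\<integral>\<^sup>+\<omega>. H (\<lambda>i\<in>R \<union> NS. if i \<in> NS then \<alpha> i \<omega> + \<omega> i else \<omega> i) \<partial>PiM (R \<union> NS) (\<lambda>_. Gs))
       = (\<integral>\<^sup>+\<omega>. (\<Prod>j\<in>NS. ennreal (rho (\<alpha> j \<omega>) (\<omega> j))) * H \<omega> \<partial>PiM (R \<union> NS) (\<lambda>_. Gs))"
proof -
  interpret PG: product_prob_space "\<lambda>_. Gs" by (rule PP_Gs)
  define Sh where "Sh = (\<lambda>\<omega>. \<lambda>i\<in>R \<union> NS. if i \<in> NS then \<alpha> i \<omega> + \<omega> i else \<omega> i)"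
  have Shm: "Sh \<in> PiM (R \<union> NS) (\<lambda>_. Gs) \<rightarrow>\<^sub>M PiM (R \<union> NS) (\<lambda>_. Gs)"
    unfolding Sh_def
  proof (rule measurable_restrict)
    fix i assume i: "i \<in> R \<union> NS"
    show "(\<lambda>\<omega>. if i \<in> NS then \<alpha> i \<omega> + \<omega> i else \<omega> i) \<in> PiM (R \<union> NS) (\<lambda>_. Gs) \<rightarrow>\<^sub>M Gs"
      using comp_meas[OF i] am by (cases "i \<in> NS") auto
  qed
  have rhom: "(\<lambda>\<omega>. (\<Prod>j\<in>NS. ennreal (rho (\<alpha> j \<omega>) (\<omega> j))) * H \<omega>) \<in> borel_measurable (PiM (R \<union> NS) (\<lambda>_. Gs))"
  proof (intro borel_measurable_times_ennreal H borel_measurable_prod_ennreal measurable_compose[OF _ measurable_ennreal])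
    fix j assume j: "j \<in> NS"
    show "(\<lambda>\<omega>. rho (\<alpha> j \<omega>) (\<omega> j)) \<in> borel_measurable (PiM (R \<union> NS) (\<lambda>_. Gs))"
    proof -
      have jm[measurable]: "(\<lambda>\<omega>. \<omega> j) \<in> borel_measurable (PiM (R \<union> NS) (\<lambda>_. Gs))"
        using j by (intro comp_meas) auto
      have a1: "\<alpha> j \<in> borel_measurable (PiM (R \<union> NS) (\<lambda>_. Gs))" using am j by auto
      have "(\<lambda>\<omega>. \<alpha> j \<omega> * \<omega> j - (\<alpha> j \<omega>)^2/2) \<in> borel_measurable (PiM (R \<union> NS) (\<lambda>_. Gs))"
        using a1 jm by (intro borel_measurable_diff borel_measurable_times borel_measurable_divide borel_measurable_power borel_measurable_const)
      from measurable_compose[OF this borel_measurable_exp] show ?thesis unfolding rho_def .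
    qed
  qed
  have m1: "(\<lambda>\<omega>. H (Sh \<omega>)) \<in> borel_measurable (PiM (R \<union> NS) (\<lambda>_. Gs))"
    using measurable_comp[OF Shm H] by (simp add: comp_def)
  have "(\<integral>\<^sup>+\<omega>. H (Sh \<omega>) \<partial>PiM (R \<union> NS) (\<lambda>_. Gs))
      = (\<integral>\<^sup>+x. (\<integral>\<^sup>+y. H (Sh (merge R NS (x, y))) \<partial>PiM NS (\<lambda>_. Gs)) \<partial>PiM R (\<lambda>_. Gs))"
    by (rule PG.product_nn_integral_fold[OF disj fin m1])
  also have "\<dots> = (\<integral>\<^sup>+x. (\<integral>\<^sup>+y. (\<Prod>j\<in>NS. ennreal (rho (\<alpha> j (merge R NS (x, y))) (merge R NS (x, y) j))) * H (merge R NS (x, y)) \<partial>PiM NS (\<lambda>_. Gs)) \<partial>PiM R (\<lambda>_. Gs))"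
  proof (rule nn_integral_cong)
    fix x assume x: "x \<in> space (PiM R (\<lambda>_. Gs))"
    have xr: "restrict x R = x" using x by (auto simp: space_PiM PiE_def extensional_restrict)
    have al: "\<alpha> j (merge R NS (x, y)) = \<alpha> j x" if "j \<in> NS" for j y
    proof -
      have "restrict (merge R NS (x, y)) R = restrict x R"
        by (auto simp: merge_def restrict_def)
      then show ?thesis using loc[OF that, of "merge R NS (x,y)"] xr by metis
    qed
    have e1: "Sh (merge R NS (x, y)) = merge R NS (x, \<lambda>j\<in>NS. \<alpha> j x + 1 * y j)" for y
    proof -
      have "\<And>j. j \<in> NS \<Longrightarrow> \<alpha> j (merge R NS (x, y)) = \<alpha> j x" by (rule al)
      then show ?thesis unfolding Sh_def using disj by (auto simp: fun_eq_iff)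
    qed
    have Hm: "(\<lambda>y. H (merge R NS (x, y))) \<in> borel_measurable (PiM NS (\<lambda>_. Gs))"
      using x by measurable
    have "(\<integral>\<^sup>+y. H (Sh (merge R NS (x, y))) \<partial>PiM NS (\<lambda>_. Gs))
        = (\<integral>\<^sup>+y. H (merge R NS (x, \<lambda>j\<in>NS. \<alpha> j x + 1 * y j)) \<partial>PiM NS (\<lambda>_. Gs))"
      by (simp only: e1)
    also have "\<dots> = (\<integral>\<^sup>+y. (\<Prod>j\<in>NS. ennreal (rho (\<alpha> j x) (y j))) * H (merge R NS (x, y)) \<partial>PiM NS (\<lambda>_. Gs))"
      by (rule L1_nn[OF fin(2) _ Hm, of "\<lambda>_. 1"]) simp
    also have "\<dots> = (\<integral>\<^sup>+y. (\<Prod>j\<in>NS. ennreal (rho (\<alpha> j (merge R NS (x, y))) (merge R NS (x, y) j))) * H (merge R NS (x, y)) \<partial>PiM NS (\<lambda>_. Gs))"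
      using disj by (intro nn_integral_cong arg_cong2[where f="(*)"] prod.cong refl) (simp add: al)
    finally show "(\<integral>\<^sup>+y. H (Sh (merge R NS (x, y))) \<partial>PiM NS (\<lambda>_. Gs)) = \<dots>" .
  qed
  also have "\<dots> = (\<integral>\<^sup>+\<omega>. (\<Prod>j\<in>NS. ennreal (rho (\<alpha> j \<omega>) (\<omega> j))) * H \<omega> \<partial>PiM (R \<union> NS) (\<lambda>_. Gs))"
    by (rule PG.product_nn_integral_fold[OF disj fin rhom, symmetric])
  finally show ?thesis unfolding Sh_def .
qed



lemma gidx_mem[simp]:
  "Nn i \<in> gidx_set K N \<longleftrightarrow> i < N" "Ww k \<in> gidx_set K N \<longleftrightarrow> k < K"
  "Hh k \<in> gidx_set K N \<longleftrightarrow> k < K" "Ss i k \<in> gidx_set K N \<longleftrightarrow> i < N \<and> k < K"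
  by (auto simp: gidx_set_def)

lemma finite_gidx[simp]: "finite (gidx_set K N)"
  by (simp add: gidx_set_def)

lemma sum_gidx:
  fixes f :: "gidx \<Rightarrow> 'a::comm_monoid_add"
  shows "(\<Sum>j\<in>gidx_set K N. f j) = (\<Sum>i<N. f (Nn i)) + (\<Sum>k<K. f (Ww k)) + (\<Sum>k<K. f (Hh k)) + (\<Sum>i<N. \<Sum>k<K. f (Ss i k))"
proof -
  have d: "gidx_set K N = ((Nn ` {..<N} \<union> Ww ` {..<K}) \<union> Hh ` {..<K}) \<union> (\<lambda>(i,k). Ss i k) ` ({..<N} \<times> {..<K})"
    by (simp add: gidx_set_def)
  have "(\<Sum>j\<in>gidx_set K N. f j) = (\<Sum>j\<in>Nn ` {..<N}. f j) + (\<Sum>j\<in>Ww ` {..<K}. f j) + (\<Sum>j\<in>Hh ` {..<K}. f j) + (\<Sum>j\<in>(\<lambda>(i,k). Ss i k) ` ({..<N} \<times> {..<K}). f j)"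
    unfolding d by (subst sum.union_disjoint, auto)+
  also have "\<dots> = (\<Sum>i<N. f (Nn i)) + (\<Sum>k<K. f (Ww k)) + (\<Sum>k<K. f (Hh k)) + (\<Sum>(i,k)\<in>{..<N} \<times> {..<K}. f (Ss i k))"
    by (subst sum.reindex, simp add: inj_on_def)+ (simp add: case_prod_unfold)
  also have "(\<Sum>(i,k)\<in>{..<N} \<times> {..<K}. f (Ss i k)) = (\<Sum>i<N. \<Sum>k<K. f (Ss i k))"
    by (simp add: sum.cartesian_product)
  finally show ?thesis .
qed

lemma data_space_comp[measurable]:
  "j \<in> gidx_set K N \<Longrightarrow> (\<lambda>\<omega>. \<omega> j) \<in> borel_measurable (data_space K N)"
  unfolding data_space_def by (rule comp_meas)

lemma hamil_meas[measurable]: "(\<lambda>\<omega>. hamil K N B lam t u \<omega> x) \<in> borel_measurable (data_space K N)"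
  unfolding hamil_def h_u_def by measurable


definition sg :: "real \<Rightarrow> real" where "sg x = (if x = -1 then -1 else 1)"

definition aC :: "(nat \<Rightarrow> real) \<Rightarrow> real \<Rightarrow> real \<Rightarrow> gidx \<Rightarrow> real" where
  "aC \<tau> sl su j = (case j of Nn i \<Rightarrow> 0 | Ww k \<Rightarrow> sl * (\<tau> k - 1) | Hh k \<Rightarrow> su * (\<tau> k - 1) | Ss i k \<Rightarrow> 0)"

definition bC :: "(nat \<Rightarrow> real) \<Rightarrow> gidx \<Rightarrow> real" where
  "bC \<tau> j = (case j of Nn i \<Rightarrow> 1 | Ww k \<Rightarrow> sg (\<tau> k) | Hh k \<Rightarrow> sg (\<tau> k) | Ss i k \<Rightarrow> sg (\<tau> k))"

definition alC :: "nat \<Rightarrow> (nat \<Rightarrow> real) \<Rightarrow> real \<Rightarrow> gidx \<Rightarrow> (gidx \<Rightarrow> real) \<Rightarrow> real" where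
  "alC K \<tau> c j \<omega> = (case j of Nn i \<Rightarrow> - c * (\<Sum>k<K. \<omega> (Ss i k) * (1 - \<tau> k)) | _ \<Rightarrow> 0)"

definition NS :: "nat \<Rightarrow> gidx set" where "NS N = Nn ` {..<N}"

definition Coord where "Coord K N \<tau> sl su \<omega> = (\<lambda>j\<in>gidx_set K N. aC \<tau> sl su j + bC \<tau> j * \<omega> j)"
definition Shr where "Shr K N \<tau> c \<omega> = (\<lambda>j\<in>gidx_set K N. if j \<in> NS N then alC K \<tau> c j \<omega> + \<omega> j else \<omega> j)"
definition Gm where "Gm K N \<tau> sl su c \<omega> = Shr K N \<tau> c (Coord K N \<tau> sl su \<omega>)"

definition rrR where "rrR K N \<tau> sl su c \<omega> =
   (\<Prod>j\<in>gidx_set K N. rho (aC \<tau> sl su j) (\<omega> j)) * (\<Prod>j\<in>NS N. rho (alC K \<tau> c j \<omega>) (\<omega> j))"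

lemma bC_pm: "bC \<tau> j = 1 \<or> bC \<tau> j = -1"
  by (auto simp: bC_def sg_def split: gidx.splits)

lemma NS_sub: "NS N \<subseteq> gidx_set K N" by (auto simp: NS_def)

lemma I_split: "gidx_set K N = (gidx_set K N - NS N) \<union> NS N" using NS_sub by blast

lemma alC_loc: "j \<in> NS N \<Longrightarrow> alC K \<tau> c j \<omega> = alC K \<tau> c j (restrict \<omega> (gidx_set K N - NS N))"
  by (auto simp: NS_def alC_def restrict_def intro!: sum.cong)

lemma alC_meas: "j \<in> NS N \<Longrightarrow> alC K \<tau> c j \<in> borel_measurable (PiM (gidx_set K N) (\<lambda>_. Gs))"
proof -
  assume "j \<in> NS N"
  then obtain i where j: "j = Nn i" "i < N" by (auto simp: NS_def)
  have [measurable]: "k < K \<Longrightarrow> (\<lambda>\<omega>. \<omega> (Ss i k)) \<in> borel_measurable (PiM (gidx_set K N) (\<lambda>_. Gs))" for k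
    using j by (intro comp_meas) simp
  show ?thesis unfolding j alC_def by simp measurable
qed

lemma rrR_nonneg: "0 \<le> rrR K N \<tau> sl su c \<omega>"
  unfolding rrR_def rho_def by (intro mult_nonneg_nonneg prod_nonneg) auto

lemma rrR_meas: "rrR K N \<tau> sl su c \<in> borel_measurable (data_space K N)"
proof -
  have [measurable]: "alC K \<tau> c j \<in> borel_measurable (data_space K N)" if "j \<in> NS N" for j
    using alC_meas[OF that] unfolding data_space_def .
  have [measurable]: "j \<in> NS N \<Longrightarrow> j \<in> gidx_set K N" for j using NS_sub by blast
  show ?thesis unfolding rrR_def rho_def by measurable
qed

lemma KL_nn:
  assumes F[measurable]: "F \<in> borel_measurable (data_space K N)"
  shows "(\<integral>\<^sup>+\<omega>. F (Gm K N \<tau> sl su c \<omega>) \<partial>data_space K N)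
       = (\<integral>\<^sup>+\<omega>. ennreal (rrR K N \<tau> sl su c \<omega>) * F \<omega> \<partial>data_space K N)"
proof -
  let ?I = "gidx_set K N"
  let ?P = "PiM (gidx_set K N) (\<lambda>_. Gs)"
  define rC where "rC \<omega> = (\<Prod>j\<in>?I. ennreal (rho (aC \<tau> sl su j) (\<omega> j)))" for \<omega>
  have F'[measurable]: "F \<in> borel_measurable ?P" using F unfolding data_space_def .
  have Shm: "Shr K N \<tau> c \<in> ?P \<rightarrow>\<^sub>M ?P" unfolding Shr_def
  proof (rule measurable_restrict)
    fix i assume i: "i \<in> ?I"
    show "(\<lambda>\<omega>. if i \<in> NS N then alC K \<tau> c i \<omega> + \<omega> i else \<omega> i) \<in> ?P \<rightarrow>\<^sub>M Gs"
      using comp_meas[OF i] alC_meas[of i N K \<tau> c] by (cases "i \<in> NS N") auto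
  qed
  have rCm[measurable]: "rC \<in> borel_measurable ?P" unfolding rC_def
  proof (intro borel_measurable_prod_ennreal measurable_compose[OF _ measurable_ennreal])
    fix j assume "j \<in> ?I"
    note [measurable] = comp_meas[OF this]
    show "(\<lambda>\<omega>. rho (aC \<tau> sl su j) (\<omega> j)) \<in> borel_measurable ?P" unfolding rho_def by measurable
  qed
  have rCsh: "rC (Shr K N \<tau> c \<omega>) = rC \<omega>" for \<omega>
    unfolding rC_def Shr_def
    by (intro prod.cong refl) (auto simp: NS_def aC_def rho_def)
  have "(\<integral>\<^sup>+\<omega>. F (Gm K N \<tau> sl su c \<omega>) \<partial>?P) = (\<integral>\<^sup>+\<omega>. (\<lambda>\<omega>. F (Shr K N \<tau> c \<omega>)) (\<lambda>j\<in>?I. aC \<tau> sl su j + bC \<tau> j * \<omega> j) \<partial>?P)"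
    by (simp add: Gm_def Coord_def)
  also have "\<dots> = (\<integral>\<^sup>+\<omega>. rC \<omega> * F (Shr K N \<tau> c \<omega>) \<partial>?P)"
    unfolding rC_def
    by (rule L1_nn[OF finite_gidx bC_pm]) (rule measurable_compose[OF Shm F'])
  also have "\<dots> = (\<integral>\<^sup>+\<omega>. (\<lambda>\<omega>. rC \<omega> * F \<omega>) (Shr K N \<tau> c \<omega>) \<partial>?P)"
    by (simp add: rCsh)
  also have "\<dots> = (\<integral>\<^sup>+\<omega>. (\<Prod>j\<in>NS N. ennreal (rho (alC K \<tau> c j \<omega>) (\<omega> j))) * (rC \<omega> * F \<omega>) \<partial>?P)"
  proof -
    have U: "(?I - NS N) \<union> NS N = ?I" using NS_sub by blast
    have fNS: "finite (NS N)" by (simp add: NS_def)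
    have H: "(\<lambda>\<omega>. rC \<omega> * F \<omega>) \<in> borel_measurable ?P" by measurable
    show ?thesis unfolding Shr_def
      by (rule shear_nn[of "?I - NS N" "NS N" "alC K \<tau> c" "\<lambda>\<omega>. rC \<omega> * F \<omega>", unfolded U])
        (simp, rule fNS, blast, erule alC_loc, erule alC_meas, rule H)
  qed
  also have "\<dots> = (\<integral>\<^sup>+\<omega>. ennreal (rrR K N \<tau> sl su c \<omega>) * F \<omega> \<partial>?P)"
  proof (intro nn_integral_cong)
    fix \<omega>
    have "ennreal (rrR K N \<tau> sl su c \<omega>) = rC \<omega> * (\<Prod>j\<in>NS N. ennreal (rho (alC K \<tau> c j \<omega>) (\<omega> j)))"
      unfolding rrR_def rC_def rho_def
      by (simp add: ennreal_mult prod_ennreal prod_nonneg)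
    then show "(\<Prod>j\<in>NS N. ennreal (rho (alC K \<tau> c j \<omega>) (\<omega> j))) * (rC \<omega> * F \<omega>) = ennreal (rrR K N \<tau> sl su c \<omega>) * F \<omega>"
      by (simp add: ac_simps)
  qed
  finally show ?thesis unfolding data_space_def .
qed



lemma prob_data: "prob_space (data_space K N)"
  unfolding data_space_def by (intro prob_space_PiM prob_space_Gs)

lemma Coord_meas: "Coord K N \<tau> sl su \<in> data_space K N \<rightarrow>\<^sub>M data_space K N"
  unfolding Coord_def data_space_def by (rule meas_aff)

lemma Shr_meas: "Shr K N \<tau> c \<in> data_space K N \<rightarrow>\<^sub>M data_space K N"
  unfolding Shr_def data_space_def
proof (rule measurable_restrict)
  fix i assume i: "i \<in> gidx_set K N"
  show "(\<lambda>\<omega>. if i \<in> NS N then alC K \<tau> c i \<omega> + \<omega> i else \<omega> i) \<in> PiM (gidx_set K N) (\<lambda>_. Gs) \<rightarrow>\<^sub>M Gs"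
    using comp_meas[OF i] alC_meas[of i N K \<tau> c] by (cases "i \<in> NS N") auto
qed

lemma Gm_meas: "Gm K N \<tau> sl su c \<in> data_space K N \<rightarrow>\<^sub>M data_space K N"
  unfolding Gm_def[abs_def] using measurable_comp[OF Coord_meas Shr_meas] by (simp add: comp_def)

lemma KL_meas: "distr (data_space K N) (data_space K N) (Gm K N \<tau> sl su c)
     = density (data_space K N) (\<lambda>\<omega>. ennreal (rrR K N \<tau> sl su c \<omega>))"
proof (rule measure_eqI)
  show "sets (distr (data_space K N) (data_space K N) (Gm K N \<tau> sl su c)) = sets (density (data_space K N) (\<lambda>\<omega>. ennreal (rrR K N \<tau> sl su c \<omega>)))"
    by simp
  fix A assume A: "A \<in> sets (distr (data_space K N) (data_space K N) (Gm K N \<tau> sl su c))"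
  then have A': "A \<in> sets (data_space K N)" by simp
  have "emeasure (distr (data_space K N) (data_space K N) (Gm K N \<tau> sl su c)) A
      = (\<integral>\<^sup>+\<omega>. indicator A \<omega> \<partial>distr (data_space K N) (data_space K N) (Gm K N \<tau> sl su c))"
    using A by (rule nn_integral_indicator[symmetric])
  also have "\<dots> = (\<integral>\<^sup>+\<omega>. indicator A (Gm K N \<tau> sl su c \<omega>) \<partial>data_space K N)"
    by (rule nn_integral_distr[OF Gm_meas]) (use A' in simp)
  also have "\<dots> = (\<integral>\<^sup>+\<omega>. ennreal (rrR K N \<tau> sl su c \<omega>) * indicator A \<omega> \<partial>data_space K N)"
    by (rule KL_nn) (use A' in simp)
  also have "\<dots> = emeasure (density (data_space K N) (\<lambda>\<omega>. ennreal (rrR K N \<tau> sl su c \<omega>))) A"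
    using A' rrR_meas by (subst emeasure_density) auto
  finally show "emeasure (distr (data_space K N) (data_space K N) (Gm K N \<tau> sl su c)) A = emeasure (density (data_space K N) (\<lambda>\<omega>. ennreal (rrR K N \<tau> sl su c \<omega>))) A" .
qed

lemma KL_int:
  fixes F :: "(gidx \<Rightarrow> real) \<Rightarrow> real"
  assumes F[measurable]: "F \<in> borel_measurable (data_space K N)"
  shows "(\<integral>\<omega>. F (Gm K N \<tau> sl su c \<omega>) \<partial>data_space K N) = (\<integral>\<omega>. rrR K N \<tau> sl su c \<omega> * F \<omega> \<partial>data_space K N)"
proof -
  have "(\<integral>\<omega>. F (Gm K N \<tau> sl su c \<omega>) \<partial>data_space K N) = (\<integral>\<omega>. F \<omega> \<partial>distr (data_space K N) (data_space K N) (Gm K N \<tau> sl su c))"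
    by (rule integral_distr[symmetric, OF Gm_meas F])
  also have "\<dots> = (\<integral>\<omega>. rrR K N \<tau> sl su c \<omega> * F \<omega> \<partial>data_space K N)"
    unfolding KL_meas by (subst integral_density) (auto simp: rrR_meas rrR_nonneg)
  finally show ?thesis .
qed

lemma KL_integrable:
  fixes F :: "(gidx \<Rightarrow> real) \<Rightarrow> real"
  assumes F[measurable]: "F \<in> borel_measurable (data_space K N)" and bd: "\<And>\<omega>. \<bar>F \<omega>\<bar> \<le> Bd"
  shows "integrable (data_space K N) (\<lambda>\<omega>. rrR K N \<tau> sl su c \<omega> * F \<omega>)"
proof -
  interpret prob_space "data_space K N" by (rule prob_data)
  have "integrable (data_space K N) (\<lambda>\<omega>. F (Gm K N \<tau> sl su c \<omega>))"
    by (rule integrable_const_bound[where B=Bd]) (use bd measurable_comp[OF Gm_meas F] in \<open>auto simp: comp_def\<close>)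
  then have "integrable (distr (data_space K N) (data_space K N) (Gm K N \<tau> sl su c)) F"
    by (subst integrable_distr_eq[OF Gm_meas F])
  then show ?thesis
    unfolding KL_meas by (subst (asm) integrable_density) (auto simp: rrR_meas rrR_nonneg)
qed



definition mulK :: "nat \<Rightarrow> (nat \<Rightarrow> real) \<Rightarrow> (nat \<Rightarrow> real) \<Rightarrow> nat \<Rightarrow> real" where
  "mulK K x y = (\<lambda>k\<in>{..<K}. x k * y k)"

lemma spins_pm: "\<tau> \<in> spins K \<Longrightarrow> k < K \<Longrightarrow> \<tau> k = 1 \<or> \<tau> k = -1"
  by (auto simp: spins_def PiE_def Pi_def)

lemma spins_sq: "\<tau> \<in> spins K \<Longrightarrow> k < K \<Longrightarrow> \<tau> k * \<tau> k = 1"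
  using spins_pm by fastforce

lemma sg_spins: "\<tau> \<in> spins K \<Longrightarrow> k < K \<Longrightarrow> sg (\<tau> k) = \<tau> k"
  using spins_pm[of \<tau> K k] by (auto simp: sg_def)

lemma pm_mult: "(a::real) \<in> {-1,1} \<Longrightarrow> b \<in> {-1,1} \<Longrightarrow> a*b \<in> {-1,1}" by auto

lemma mulK_spins: assumes "x \<in> spins K" "y \<in> spins K" shows "mulK K x y \<in> spins K"
proof -
  have "\<forall>k\<in>{..<K}. x k * y k \<in> {-1,1}"
  proof
    fix k assume "k \<in> {..<K}"
    then have "x k \<in> {-1,1}" "y k \<in> {-1,1}" using assms by (auto simp: spins_def PiE_iff)
    then show "x k * y k \<in> {-1,1}" by (rule pm_mult)
  qed
  then show ?thesis unfolding spins_def mulK_def PiE_iff by simp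
qed

lemma mulK_apply: "k < K \<Longrightarrow> mulK K x y k = x k * y k" by (simp add: mulK_def)

lemma mulK_inv: "\<tau> \<in> spins K \<Longrightarrow> x \<in> spins K \<Longrightarrow> mulK K \<tau> (mulK K \<tau> x) = x"
  unfolding mulK_def using spins_sq[of \<tau> K]
  by (auto simp: fun_eq_iff spins_def PiE_def extensional_def mult.assoc[symmetric])

lemma mulK_comm: "mulK K x y = mulK K y x" by (auto simp: mulK_def fun_eq_iff mult.commute)

lemma mulK_bij: "\<tau> \<in> spins K \<Longrightarrow> bij_betw (mulK K \<tau>) (spins K) (spins K)"
  by (rule bij_betwI[where g="mulK K \<tau>"]) (auto simp: mulK_spins mulK_inv)

lemma finite_spins[simp]: "finite (spins K)" unfolding spins_def by (auto intro!: finite_PiE)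

lemma spins_ne: "(\<lambda>k\<in>{..<K}. 1) \<in> spins K" unfolding spins_def by auto

lemma Gm_Nn: assumes "\<tau> \<in> spins K" "i < N"
  shows "Gm K N \<tau> sl su c \<omega> (Nn i) = \<omega> (Nn i) - c * (\<Sum>k<K. \<tau> k * \<omega> (Ss i k) * (1 - \<tau> k))"
  using assms unfolding Gm_def Shr_def Coord_def
  by (auto simp: NS_def alC_def aC_def bC_def sg_spins intro!: sum.cong)

lemma Gm_Ww: assumes "\<tau> \<in> spins K" "k < K"
  shows "Gm K N \<tau> sl su c \<omega> (Ww k) = sl * (\<tau> k - 1) + \<tau> k * \<omega> (Ww k)"
  using assms unfolding Gm_def Shr_def Coord_def
  by (auto simp: NS_def alC_def aC_def bC_def sg_spins)

lemma Gm_Hh: assumes "\<tau> \<in> spins K" "k < K"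
  shows "Gm K N \<tau> sl su c \<omega> (Hh k) = su * (\<tau> k - 1) + \<tau> k * \<omega> (Hh k)"
  using assms unfolding Gm_def Shr_def Coord_def
  by (auto simp: NS_def alC_def aC_def bC_def sg_spins)

lemma Gm_Ss: assumes "\<tau> \<in> spins K" "i < N" "k < K"
  shows "Gm K N \<tau> sl su c \<omega> (Ss i k) = \<tau> k * \<omega> (Ss i k)"
  using assms unfolding Gm_def Shr_def Coord_def
  by (auto simp: NS_def alC_def aC_def bC_def sg_spins)



lemma lin2: "a * sum f S + b * sum g S = (\<Sum>i\<in>S. a * f i + b * g i)" for a b :: real
  by (simp add: sum.distrib sum_distrib_left)

lemma hamil_gauge:
  assumes tau: "\<tau> \<in> spins K" and u: "0 \<le> u"
  shows "hamil K N B lam t u (Gm K N \<tau> (sqrt (lam t)) (sqrt u) (sqrt (B t) / sqrt (real N)) \<omega>) (mulK K \<tau> x)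
       = hamil K N B lam t u \<omega> x + sqrt u * (\<Sum>k<K. \<bar>\<omega> (Hh k)\<bar>) - sqrt u * (\<Sum>k<K. \<bar>Gm K N \<tau> (sqrt (lam t)) (sqrt u) (sqrt (B t) / sqrt (real N)) \<omega> (Hh k)\<bar>)"
proof -
  define G where "G = Gm K N \<tau> (sqrt (lam t)) (sqrt u) (sqrt (B t) / sqrt (real N)) \<omega>"
  define c where "c = sqrt (B t) / sqrt (real N)"
  define sl where "sl = sqrt (lam t)"
  define su where "su = sqrt u"
  have susu: "su * su = u" using u by (simp add: su_def)
  have tpm: "\<And>k. k < K \<Longrightarrow> \<tau> k = 1 \<or> \<tau> k = -1" using spins_pm[OF tau] by blast
  have pN: "(\<Sum>i<N. (G (Nn i) + c * (\<Sum>k<K. G (Ss i k) * (1 - mulK K \<tau> x k)))\<^sup>2)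
          = (\<Sum>i<N. (\<omega> (Nn i) + c * (\<Sum>k<K. \<omega> (Ss i k) * (1 - x k)))\<^sup>2)"
  proof (rule sum.cong[OF refl])
    fix i assume "i \<in> {..<N}" then have i: "i < N" by simp
    define A where "A = (\<Sum>k<K. \<tau> k * \<omega> (Ss i k) * (1 - \<tau> k))"
    define Bs where "Bs = (\<Sum>k<K. \<tau> k * \<omega> (Ss i k) * (1 - \<tau> k * x k))"
    have e1: "G (Nn i) = \<omega> (Nn i) - c * A" unfolding G_def A_def c_def using Gm_Nn[OF tau i] by simp
    have e2: "(\<Sum>k<K. G (Ss i k) * (1 - mulK K \<tau> x k)) = Bs"
      unfolding Bs_def G_def by (intro sum.cong refl) (simp add: Gm_Ss[OF tau i] mulK_apply)
    have "Bs - A = (\<Sum>k<K. \<tau> k * \<omega> (Ss i k) * (1 - \<tau> k * x k) - \<tau> k * \<omega> (Ss i k) * (1 - \<tau> k))"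
      unfolding A_def Bs_def by (simp add: sum_subtractf)
    also have "\<dots> = (\<Sum>k<K. \<omega> (Ss i k) * (1 - x k))"
    proof (rule sum.cong[OF refl])
      fix k assume "k \<in> {..<K}"
      then have "\<tau> k = 1 \<or> \<tau> k = -1" using tpm by simp
      then show "\<tau> k * \<omega> (Ss i k) * (1 - \<tau> k * x k) - \<tau> k * \<omega> (Ss i k) * (1 - \<tau> k) = \<omega> (Ss i k) * (1 - x k)"
        by (auto simp: algebra_simps)
    qed
    finally have "Bs - A = (\<Sum>k<K. \<omega> (Ss i k) * (1 - x k))" .
    then have "G (Nn i) + c * (\<Sum>k<K. G (Ss i k) * (1 - mulK K \<tau> x k)) = \<omega> (Nn i) + c * (\<Sum>k<K. \<omega> (Ss i k) * (1 - x k))"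
      unfolding e1 e2 by (simp add: algebra_simps flip: right_diff_distrib)
    then show "(G (Nn i) + c * (\<Sum>k<K. G (Ss i k) * (1 - mulK K \<tau> x k)))\<^sup>2 = (\<omega> (Nn i) + c * (\<Sum>k<K. \<omega> (Ss i k) * (1 - x k)))\<^sup>2"
      by simp
  qed
  have pW: "(\<Sum>k<K. (G (Ww k) + sl * (1 - mulK K \<tau> x k))\<^sup>2) = (\<Sum>k<K. (\<omega> (Ww k) + sl * (1 - x k))\<^sup>2)"
  proof (rule sum.cong[OF refl])
    fix k assume "k \<in> {..<K}" then have k: "k < K" by simp
    have "G (Ww k) = sl * (\<tau> k - 1) + \<tau> k * \<omega> (Ww k)" unfolding G_def sl_def using Gm_Ww[OF tau k] by simp
    moreover have "\<tau> k = 1 \<or> \<tau> k = -1" using tpm k by simp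
    ultimately show "(G (Ww k) + sl * (1 - mulK K \<tau> x k))\<^sup>2 = (\<omega> (Ww k) + sl * (1 - x k))\<^sup>2"
      using k by (auto simp: mulK_apply power2_eq_square algebra_simps)
  qed
  have pH: "su * (\<Sum>k<K. G (Hh k) * mulK K \<tau> x k) + u * (\<Sum>k<K. mulK K \<tau> x k)
          = su * (\<Sum>k<K. \<omega> (Hh k) * x k) + u * (\<Sum>k<K. x k)"
    unfolding lin2
  proof (rule sum.cong[OF refl])
    fix k assume "k \<in> {..<K}" then have k: "k < K" by simp
    have g: "G (Hh k) = su * (\<tau> k - 1) + \<tau> k * \<omega> (Hh k)" unfolding G_def su_def using Gm_Hh[OF tau k] by simp
    have "\<tau> k = 1 \<or> \<tau> k = -1" using tpm k by simp
    then show "su * (G (Hh k) * mulK K \<tau> x k) + u * mulK K \<tau> x k = su * (\<omega> (Hh k) * x k) + u * x k"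
    proof
      assume t: "\<tau> k = 1"
      show ?thesis using g t k by (simp add: mulK_apply)
    next
      assume t: "\<tau> k = -1"
      have g2: "G (Hh k) = - 2 * su - \<omega> (Hh k)" using g t by simp
      show ?thesis unfolding g2 mulK_apply[OF k] t susu[symmetric] by (simp add: algebra_simps)
    qed
  qed
  have "hamil K N B lam t u G (mulK K \<tau> x)
       = hamil K N B lam t u \<omega> x + sqrt u * (\<Sum>k<K. \<bar>\<omega> (Hh k)\<bar>) - sqrt u * (\<Sum>k<K. \<bar>G (Hh k)\<bar>)"
    unfolding hamil_def h_u_def
    using pN pW pH unfolding c_def sl_def su_def by simp
  then show ?thesis unfolding G_def .
qed


lemma rrR_eq:
  assumes tau: "\<tau> \<in> spins K" and u: "0 \<le> u"
  shows "rrR K N \<tau> (sqrt (lam t)) (sqrt u) (sqrt (B t) / sqrt (real N)) \<omega>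
       = exp (hamil K N B lam t u \<omega> \<tau> - hamil K N B lam t u \<omega> (\<lambda>_. 1))"
proof -
  define c where "c = sqrt (B t) / sqrt (real N)"
  define sl where "sl = sqrt (lam t)"
  define su where "su = sqrt u"
  have susu: "su * su = u" using u by (simp add: su_def)
  have tpm: "\<And>k. k < K \<Longrightarrow> \<tau> k = 1 \<or> \<tau> k = -1" using spins_pm[OF tau] by blast
  define bet where "bet i = c * (\<Sum>k<K. \<omega> (Ss i k) * (1 - \<tau> k))" for i
  have S1: "(\<Sum>j\<in>gidx_set K N. aC \<tau> sl su j * \<omega> j - (aC \<tau> sl su j)\<^sup>2 / 2)
      = (\<Sum>k<K. sl * (\<tau> k - 1) * \<omega> (Ww k) - (sl * (\<tau> k - 1))\<^sup>2 / 2)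
      + (\<Sum>k<K. su * (\<tau> k - 1) * \<omega> (Hh k) - (su * (\<tau> k - 1))\<^sup>2 / 2)"
    by (simp add: sum_gidx aC_def)
  have S2: "(\<Sum>j\<in>NS N. alC K \<tau> c j \<omega> * \<omega> j - (alC K \<tau> c j \<omega>)\<^sup>2 / 2)
      = (\<Sum>i<N. (- bet i) * \<omega> (Nn i) - (- bet i)\<^sup>2 / 2)"
    unfolding NS_def by (subst sum.reindex) (auto simp: inj_on_def alC_def bet_def)
  have rr: "rrR K N \<tau> sl su c \<omega> = exp ((\<Sum>j\<in>gidx_set K N. aC \<tau> sl su j * \<omega> j - (aC \<tau> sl su j)\<^sup>2 / 2)
      + (\<Sum>j\<in>NS N. alC K \<tau> c j \<omega> * \<omega> j - (alC K \<tau> c j \<omega>)\<^sup>2 / 2))"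
    unfolding rrR_def rho_def exp_add by (simp add: exp_sum NS_def)
  have eN: "-(1/2) * (\<Sum>i<N. (\<omega> (Nn i) + bet i)\<^sup>2) + (1/2) * (\<Sum>i<N. (\<omega> (Nn i))\<^sup>2)
      = (\<Sum>i<N. (- bet i) * \<omega> (Nn i) - (- bet i)\<^sup>2 / 2)"
    unfolding lin2 by (intro sum.cong refl) (simp add: power2_eq_square algebra_simps)
  have eW: "-(1/2) * (\<Sum>k<K. (\<omega> (Ww k) + sl * (1 - \<tau> k))\<^sup>2) + (1/2) * (\<Sum>k<K. (\<omega> (Ww k))\<^sup>2)
      = (\<Sum>k<K. sl * (\<tau> k - 1) * \<omega> (Ww k) - (sl * (\<tau> k - 1))\<^sup>2 / 2)"
    unfolding lin2 by (intro sum.cong refl) (simp add: power2_eq_square field_simps)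
  have eH: "h_u K u \<omega> \<tau> - h_u K u \<omega> (\<lambda>_. 1)
      = (\<Sum>k<K. su * (\<tau> k - 1) * \<omega> (Hh k) - (su * (\<tau> k - 1))\<^sup>2 / 2)"
  proof -
    have "(\<Sum>k<K. su * (\<tau> k - 1) * \<omega> (Hh k) - (su * (\<tau> k - 1))\<^sup>2 / 2)
        = (\<Sum>k<K. su * (\<omega> (Hh k) * \<tau> k) + u * \<tau> k - su * \<omega> (Hh k) - u)"
    proof (rule sum.cong[OF refl])
      fix k assume "k \<in> {..<K}"
      then have "\<tau> k = 1 \<or> \<tau> k = -1" using tpm by simp
      then show "su * (\<tau> k - 1) * \<omega> (Hh k) - (su * (\<tau> k - 1))\<^sup>2 / 2 = su * (\<omega> (Hh k) * \<tau> k) + u * \<tau> k - su * \<omega> (Hh k) - u"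
        by (auto simp: power2_eq_square algebra_simps susu[symmetric])
    qed
    also have "\<dots> = h_u K u \<omega> \<tau> - h_u K u \<omega> (\<lambda>_. 1)"
      unfolding h_u_def su_def by (simp add: sum.distrib sum_subtractf sum_distrib_left)
    finally show ?thesis by simp
  qed
  have H1: "hamil K N B lam t u \<omega> \<tau> = -(1/2) * (\<Sum>i<N. (\<omega> (Nn i) + bet i)\<^sup>2) - (1/2) * (\<Sum>k<K. (\<omega> (Ww k) + sl * (1 - \<tau> k))\<^sup>2) + h_u K u \<omega> \<tau>"
    unfolding hamil_def bet_def c_def sl_def by simp
  have H2: "hamil K N B lam t u \<omega> (\<lambda>_. 1) = -(1/2) * (\<Sum>i<N. (\<omega> (Nn i))\<^sup>2) - (1/2) * (\<Sum>k<K. (\<omega> (Ww k))\<^sup>2) + h_u K u \<omega> (\<lambda>_. 1)"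
    unfolding hamil_def by simp
  have "rrR K N \<tau> sl su c \<omega> = exp (hamil K N B lam t u \<omega> \<tau> - hamil K N B lam t u \<omega> (\<lambda>_. 1))"
    unfolding rr S1 S2 H1 H2 using eN eW eH by (simp add: algebra_simps)
  then show ?thesis unfolding c_def sl_def su_def .
qed



lemma gw_pos: "0 < gibbs_weight K N B lam t u \<omega> x" by (simp add: gibbs_weight_def)

lemma Z_pos: "0 < partition_fn K N B lam t u \<omega>"
  unfolding partition_fn_def using spins_ne[of K]
  by (intro sum_pos2[where i="\<lambda>k\<in>{..<K}. 1"]) (auto simp: gw_pos less_imp_le)

lemma gw_gauge:
  assumes tau: "\<tau> \<in> spins K" and u: "0 \<le> u"
  shows "gibbs_weight K N B lam t u (Gm K N \<tau> (sqrt (lam t)) (sqrt u) (sqrt (B t) / sqrt (real N)) \<omega>) (mulK K \<tau> x)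
    = exp (sqrt u * (\<Sum>k<K. \<bar>\<omega> (Hh k)\<bar>) - sqrt u * (\<Sum>k<K. \<bar>Gm K N \<tau> (sqrt (lam t)) (sqrt u) (sqrt (B t) / sqrt (real N)) \<omega> (Hh k)\<bar>))
      * gibbs_weight K N B lam t u \<omega> x"
  unfolding gibbs_weight_def hamil_gauge[OF tau u] by (simp add: exp_add[symmetric] algebra_simps)

lemma avg1_cong: "(\<And>x. x \<in> spins K \<Longrightarrow> f x = f' x) \<Longrightarrow> gibbs_avg1 K N B lam t u \<omega> f = gibbs_avg1 K N B lam t u \<omega> f'"
  unfolding gibbs_avg1_def by (simp cong: sum.cong)

lemma avg2_cong: "(\<And>x y. x \<in> spins K \<Longrightarrow> y \<in> spins K \<Longrightarrow> f x y = f' x y) \<Longrightarrow> gibbs_avg2 K N B lam t u \<omega> f = gibbs_avg2 K N B lam t u \<omega> f'"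
  unfolding gibbs_avg2_def by (simp cong: sum.cong)

lemma avg1_gauge:
  assumes tau: "\<tau> \<in> spins K" and u: "0 \<le> u"
  shows "gibbs_avg1 K N B lam t u (Gm K N \<tau> (sqrt (lam t)) (sqrt u) (sqrt (B t) / sqrt (real N)) \<omega>) f
       = gibbs_avg1 K N B lam t u \<omega> (\<lambda>x. f (mulK K \<tau> x))"
proof -
  define G where "G = Gm K N \<tau> (sqrt (lam t)) (sqrt u) (sqrt (B t) / sqrt (real N)) \<omega>"
  define E where "E = exp (sqrt u * (\<Sum>k<K. \<bar>\<omega> (Hh k)\<bar>) - sqrt u * (\<Sum>k<K. \<bar>G (Hh k)\<bar>))"
  have gg: "gibbs_weight K N B lam t u G (mulK K \<tau> x) = E * gibbs_weight K N B lam t u \<omega> x" for x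
    unfolding G_def E_def by (rule gw_gauge[OF tau u])
  have E: "0 < E" by (simp add: E_def)
  have num: "(\<Sum>x\<in>spins K. gibbs_weight K N B lam t u G x * f x) = E * (\<Sum>x\<in>spins K. gibbs_weight K N B lam t u \<omega> x * f (mulK K \<tau> x))"
    by (subst sum.reindex_bij_betw[OF mulK_bij[OF tau], symmetric]) (simp add: gg sum_distrib_left mult.assoc)
  have den: "partition_fn K N B lam t u G = E * partition_fn K N B lam t u \<omega>"
    unfolding partition_fn_def
    by (subst sum.reindex_bij_betw[OF mulK_bij[OF tau], symmetric]) (simp add: gg sum_distrib_left)
  show ?thesis unfolding G_def[symmetric] gibbs_avg1_def num den using E by simp
qed

lemma avg2_gauge:
  assumes tau: "\<tau> \<in> spins K" and u: "0 \<le> u"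
  shows "gibbs_avg2 K N B lam t u (Gm K N \<tau> (sqrt (lam t)) (sqrt u) (sqrt (B t) / sqrt (real N)) \<omega>) f
       = gibbs_avg2 K N B lam t u \<omega> (\<lambda>x y. f (mulK K \<tau> x) (mulK K \<tau> y))"
proof -
  define G where "G = Gm K N \<tau> (sqrt (lam t)) (sqrt u) (sqrt (B t) / sqrt (real N)) \<omega>"
  define E where "E = exp (sqrt u * (\<Sum>k<K. \<bar>\<omega> (Hh k)\<bar>) - sqrt u * (\<Sum>k<K. \<bar>G (Hh k)\<bar>))"
  have gg: "gibbs_weight K N B lam t u G (mulK K \<tau> x) = E * gibbs_weight K N B lam t u \<omega> x" for x
    unfolding G_def E_def by (rule gw_gauge[OF tau u])
  have E: "0 < E" by (simp add: E_def)
  have inner: "(\<Sum>y\<in>spins K. gibbs_weight K N B lam t u G x1 * gibbs_weight K N B lam t u G y * f x1 y)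
     = (\<Sum>y\<in>spins K. gibbs_weight K N B lam t u G x1 * (E * gibbs_weight K N B lam t u \<omega> y) * f x1 (mulK K \<tau> y))" for x1
    by (subst sum.reindex_bij_betw[OF mulK_bij[OF tau], symmetric]) (simp add: gg)
  have num: "(\<Sum>x\<in>spins K. \<Sum>y\<in>spins K. gibbs_weight K N B lam t u G x * gibbs_weight K N B lam t u G y * f x y)
     = (E * E) * (\<Sum>x\<in>spins K. \<Sum>y\<in>spins K. gibbs_weight K N B lam t u \<omega> x * gibbs_weight K N B lam t u \<omega> y * f (mulK K \<tau> x) (mulK K \<tau> y))"
    unfolding inner
    by (subst sum.reindex_bij_betw[OF mulK_bij[OF tau], symmetric]) (simp add: gg sum_distrib_left algebra_simps)
  have den: "partition_fn K N B lam t u G = E * partition_fn K N B lam t u \<omega>"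
    unfolding partition_fn_def
    by (subst sum.reindex_bij_betw[OF mulK_bij[OF tau], symmetric]) (simp add: gg sum_distrib_left)
  show ?thesis unfolding G_def[symmetric] gibbs_avg2_def num den using E by (simp add: power2_eq_square)
qed

lemma avg1_meas[measurable]: "(\<lambda>\<omega>. gibbs_avg1 K N B lam t u \<omega> f) \<in> borel_measurable (data_space K N)"
  unfolding gibbs_avg1_def partition_fn_def gibbs_weight_def by measurable

lemma avg2_meas[measurable]: "(\<lambda>\<omega>. gibbs_avg2 K N B lam t u \<omega> f) \<in> borel_measurable (data_space K N)"
  unfolding gibbs_avg2_def partition_fn_def gibbs_weight_def by measurable

lemma avg1_bound: "\<bar>gibbs_avg1 K N B lam t u \<omega> f\<bar> \<le> (\<Sum>x\<in>spins K. \<bar>f x\<bar>)"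
proof -
  let ?w = "gibbs_weight K N B lam t u \<omega>" and ?Z = "partition_fn K N B lam t u \<omega>"
  have Z: "0 < ?Z" by (rule Z_pos)
  have wle: "?w x \<le> ?Z" if "x \<in> spins K" for x
    unfolding partition_fn_def using that by (intro member_le_sum) (auto simp: gw_pos less_imp_le)
  have "\<bar>\<Sum>x\<in>spins K. ?w x * f x\<bar> \<le> (\<Sum>x\<in>spins K. \<bar>?w x * f x\<bar>)" by (rule sum_abs)
  also have "\<dots> \<le> (\<Sum>x\<in>spins K. ?Z * \<bar>f x\<bar>)"
    by (intro sum_mono) (auto simp: abs_mult gw_pos less_imp_le intro!: mult_right_mono wle)
  finally have "\<bar>\<Sum>x\<in>spins K. ?w x * f x\<bar> \<le> ?Z * (\<Sum>x\<in>spins K. \<bar>f x\<bar>)" by (simp add: sum_distrib_left)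
  then show ?thesis unfolding gibbs_avg1_def using Z by (simp add: abs_div pos_divide_le_eq mult.commute)
qed

lemma avg2_bound: "\<bar>gibbs_avg2 K N B lam t u \<omega> f\<bar> \<le> (\<Sum>x\<in>spins K. \<Sum>y\<in>spins K. \<bar>f x y\<bar>)"
proof -
  let ?w = "gibbs_weight K N B lam t u \<omega>" and ?Z = "partition_fn K N B lam t u \<omega>"
  have Z: "0 < ?Z" by (rule Z_pos)
  have wle: "?w x \<le> ?Z" if "x \<in> spins K" for x
    unfolding partition_fn_def using that by (intro member_le_sum) (auto simp: gw_pos less_imp_le)
  have w2: "?w x * ?w y \<le> ?Z * ?Z" if "x \<in> spins K" "y \<in> spins K" for x y
    using wle[OF that(1)] wle[OF that(2)] Z by (intro mult_mono) (auto simp: gw_pos less_imp_le)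
  have "\<bar>\<Sum>x\<in>spins K. \<Sum>y\<in>spins K. ?w x * ?w y * f x y\<bar> \<le> (\<Sum>x\<in>spins K. \<bar>\<Sum>y\<in>spins K. ?w x * ?w y * f x y\<bar>)" by (rule sum_abs)
  also have "\<dots> \<le> (\<Sum>x\<in>spins K. \<Sum>y\<in>spins K. \<bar>?w x * ?w y * f x y\<bar>)" by (intro sum_mono sum_abs)
  also have "\<dots> \<le> (\<Sum>x\<in>spins K. \<Sum>y\<in>spins K. (?Z * ?Z) * \<bar>f x y\<bar>)"
    by (intro sum_mono) (auto simp: abs_mult gw_pos less_imp_le intro!: mult_right_mono w2)
  finally have "\<bar>\<Sum>x\<in>spins K. \<Sum>y\<in>spins K. ?w x * ?w y * f x y\<bar> \<le> (?Z * ?Z) * (\<Sum>x\<in>spins K. \<Sum>y\<in>spins K. \<bar>f x y\<bar>)"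
    by (simp add: sum_distrib_left)
  then show ?thesis unfolding gibbs_avg2_def using Z
    by (simp add: abs_div pos_divide_le_eq mult.commute power2_eq_square)
qed



lemma mulK_gauge1: "\<tau> \<in> spins K \<Longrightarrow> y \<in> spins K \<Longrightarrow> mulK K (mulK K \<tau> y) \<tau> = y"
  by (simp add: mulK_comm[of K "mulK K \<tau> y"] mulK_inv)

lemma mulK_gauge2: "\<tau> \<in> spins K \<Longrightarrow> mulK K (mulK K \<tau> x) (mulK K \<tau> y) = mulK K x y"
  using spins_sq[of \<tau> K] by (auto simp: mulK_def fun_eq_iff algebra_simps)

lemma pointwise_bayes:
  assumes u: "0 \<le> u"
  shows "(\<Sum>\<tau>\<in>spins K. rrR K N \<tau> (sqrt (lam t)) (sqrt u) (sqrt (B t) / sqrt (real N)) \<omega>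
            * gibbs_avg1 K N B lam t u \<omega> (\<lambda>x. g (mulK K x \<tau>)))
       = (\<Sum>\<tau>\<in>spins K. rrR K N \<tau> (sqrt (lam t)) (sqrt u) (sqrt (B t) / sqrt (real N)) \<omega>
            * gibbs_avg2 K N B lam t u \<omega> (\<lambda>x y. g (mulK K x y)))"
proof -
  let ?w = "gibbs_weight K N B lam t u \<omega>" and ?Z = "partition_fn K N B lam t u \<omega>"
  define w1 where "w1 = ?w (\<lambda>_. 1)"
  have w1: "0 < w1" by (simp add: w1_def gw_pos)
  have Z: "0 < ?Z" by (rule Z_pos)
  have rr: "rrR K N \<tau> (sqrt (lam t)) (sqrt u) (sqrt (B t) / sqrt (real N)) \<omega> = ?w \<tau> / w1"
    if "\<tau> \<in> spins K" for \<tau>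
    using rrR_eq[OF that u] by (simp add: w1_def gibbs_weight_def exp_diff)
  define S where "S = (\<Sum>x\<in>spins K. \<Sum>y\<in>spins K. ?w x * ?w y * g (mulK K x y))"
  have "(\<Sum>\<tau>\<in>spins K. rrR K N \<tau> (sqrt (lam t)) (sqrt u) (sqrt (B t) / sqrt (real N)) \<omega>
            * gibbs_avg1 K N B lam t u \<omega> (\<lambda>x. g (mulK K x \<tau>)))
      = (\<Sum>\<tau>\<in>spins K. (\<Sum>x\<in>spins K. ?w x * ?w \<tau> * g (mulK K x \<tau>)) / (w1 * ?Z))"
    by (intro sum.cong refl) (simp add: rr gibbs_avg1_def sum_distrib_left sum_divide_distrib algebra_simps)
  also have "\<dots> = S / (w1 * ?Z)"
    unfolding S_def sum_divide_distrib[symmetric] by (subst sum.swap) simp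
  finally have L: "(\<Sum>\<tau>\<in>spins K. rrR K N \<tau> (sqrt (lam t)) (sqrt u) (sqrt (B t) / sqrt (real N)) \<omega>
            * gibbs_avg1 K N B lam t u \<omega> (\<lambda>x. g (mulK K x \<tau>))) = S / (w1 * ?Z)" .
  have "(\<Sum>\<tau>\<in>spins K. rrR K N \<tau> (sqrt (lam t)) (sqrt u) (sqrt (B t) / sqrt (real N)) \<omega>
            * gibbs_avg2 K N B lam t u \<omega> (\<lambda>x y. g (mulK K x y)))
      = (\<Sum>\<tau>\<in>spins K. ?w \<tau>) / w1 * (S / ?Z\<^sup>2)"
    by (simp add: rr gibbs_avg2_def S_def sum_distrib_right sum_divide_distrib)
  also have "\<dots> = S / (w1 * ?Z)"
    using Z w1 unfolding partition_fn_def[symmetric] by (simp add: power2_eq_square field_simps)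
  finally show ?thesis using L by simp
qed

lemma nishi:
  assumes u: "0 \<le> u"
  shows "(\<integral>\<omega>. gibbs_avg1 K N B lam t u \<omega> g \<partial>data_space K N)
       = (\<integral>\<omega>. gibbs_avg2 K N B lam t u \<omega> (\<lambda>x y. g (mulK K x y)) \<partial>data_space K N)"
proof -
  let ?P = "data_space K N"
  let ?r = "\<lambda>\<tau>. rrR K N \<tau> (sqrt (lam t)) (sqrt u) (sqrt (B t) / sqrt (real N))"
  let ?G = "\<lambda>\<tau>. Gm K N \<tau> (sqrt (lam t)) (sqrt u) (sqrt (B t) / sqrt (real N))"
  let ?F = "\<lambda>\<tau> \<omega>. gibbs_avg1 K N B lam t u \<omega> (\<lambda>x. g (mulK K x \<tau>))"
  let ?A1 = "\<lambda>\<omega>. gibbs_avg1 K N B lam t u \<omega> g"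
  let ?A2 = "\<lambda>\<omega>. gibbs_avg2 K N B lam t u \<omega> (\<lambda>x y. g (mulK K x y))"
  have e1: "(\<integral>\<omega>. ?A1 \<omega> \<partial>?P) = (\<integral>\<omega>. ?r \<tau> \<omega> * ?F \<tau> \<omega> \<partial>?P)" if tau: "\<tau> \<in> spins K" for \<tau>
  proof -
    have "?F \<tau> (?G \<tau> \<omega>) = ?A1 \<omega>" for \<omega>
      unfolding avg1_gauge[OF tau u] by (rule avg1_cong) (simp add: mulK_gauge1[OF tau])
    then have "(\<integral>\<omega>. ?A1 \<omega> \<partial>?P) = (\<integral>\<omega>. ?F \<tau> (?G \<tau> \<omega>) \<partial>?P)" by simp
    also have "\<dots> = (\<integral>\<omega>. ?r \<tau> \<omega> * ?F \<tau> \<omega> \<partial>?P)" by (rule KL_int) simp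
    finally show ?thesis .
  qed
  have e2: "(\<integral>\<omega>. ?A2 \<omega> \<partial>?P) = (\<integral>\<omega>. ?r \<tau> \<omega> * ?A2 \<omega> \<partial>?P)" if tau: "\<tau> \<in> spins K" for \<tau>
  proof -
    have "?A2 (?G \<tau> \<omega>) = ?A2 \<omega>" for \<omega>
      unfolding avg2_gauge[OF tau u] by (simp add: mulK_gauge2[OF tau])
    then have "(\<integral>\<omega>. ?A2 \<omega> \<partial>?P) = (\<integral>\<omega>. ?A2 (?G \<tau> \<omega>) \<partial>?P)" by simp
    also have "\<dots> = (\<integral>\<omega>. ?r \<tau> \<omega> * ?A2 \<omega> \<partial>?P)" by (rule KL_int) simp
    finally show ?thesis .
  qed
  have i1: "integrable ?P (\<lambda>\<omega>. ?r \<tau> \<omega> * ?F \<tau> \<omega>)" for \<tau>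
    by (rule KL_integrable[where Bd="\<Sum>x\<in>spins K. \<bar>g (mulK K x \<tau>)\<bar>"]) (simp_all add: avg1_bound)
  have i2: "integrable ?P (\<lambda>\<omega>. ?r \<tau> \<omega> * ?A2 \<omega>)" for \<tau>
    by (rule KL_integrable[where Bd="\<Sum>x\<in>spins K. \<Sum>y\<in>spins K. \<bar>g (mulK K x y)\<bar>"]) (simp_all add: avg2_bound)
  have "real (card (spins K)) * (\<integral>\<omega>. ?A1 \<omega> \<partial>?P) = (\<Sum>\<tau>\<in>spins K. \<integral>\<omega>. ?A1 \<omega> \<partial>?P)" by simp
  also have "\<dots> = (\<Sum>\<tau>\<in>spins K. \<integral>\<omega>. ?r \<tau> \<omega> * ?F \<tau> \<omega> \<partial>?P)" by (intro sum.cong refl e1)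
  also have "\<dots> = (\<integral>\<omega>. (\<Sum>\<tau>\<in>spins K. ?r \<tau> \<omega> * ?F \<tau> \<omega>) \<partial>?P)" using Bochner_Integration.integral_sum[where I="spins K", OF i1] by simp
  also have "\<dots> = (\<integral>\<omega>. (\<Sum>\<tau>\<in>spins K. ?r \<tau> \<omega> * ?A2 \<omega>) \<partial>?P)" by (simp only: pointwise_bayes[OF u])
  also have "\<dots> = (\<Sum>\<tau>\<in>spins K. \<integral>\<omega>. ?r \<tau> \<omega> * ?A2 \<omega> \<partial>?P)" using Bochner_Integration.integral_sum[where I="spins K", OF i2] by simp
  also have "\<dots> = (\<Sum>\<tau>\<in>spins K. \<integral>\<omega>. ?A2 \<omega> \<partial>?P)" by (intro sum.cong refl e2[symmetric])
  also have "\<dots> = real (card (spins K)) * (\<integral>\<omega>. ?A2 \<omega> \<partial>?P)" by simp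
  finally show ?thesis
    using spins_ne[of K] by auto
qed


lemma magn_mulK: "magn K (mulK K x y) = overlap K x y"
proof -
  have "(\<Sum>k<K. mulK K x y k) = (\<Sum>k<K. x k * y k)" by (intro sum.cong refl) (simp add: mulK_def)
  then show ?thesis unfolding magn_def overlap_def by simp
qed

theorem lemma1:
  fixes K N :: nat and B lam :: "real \<Rightarrow> real" and t u :: real
  assumes "0 < K" and "0 < N"
    and "\<forall>s\<in>{0..1}. 0 \<le> B s" and "\<forall>s\<in>{0..1}. 0 \<le> lam s"
    and "t \<in> {0..1}" and "0 \<le> u"
  shows "(\<forall>a::real.
            (\<integral>\<omega>. gibbs_avg1 K N B lam t u \<omega> (\<lambda>x. if magn K x = a then 1 else 0) \<partial>data_space K N)
          = (\<integral>\<omega>. gibbs_avg2 K N B lam t u \<omega> (\<lambda>x1 x2. if overlap K x1 x2 = a then 1 else 0) \<partial>data_space K N))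
       \<and> (\<integral>\<omega>. gibbs_avg1 K N B lam t u \<omega> (magn K) \<partial>data_space K N)
          = (\<integral>\<omega>. gibbs_avg2 K N B lam t u \<omega> (overlap K) \<partial>data_space K N)"
proof (intro conjI allI)
  fix a :: real
  show "(\<integral>\<omega>. gibbs_avg1 K N B lam t u \<omega> (\<lambda>x. if magn K x = a then 1 else 0) \<partial>data_space K N)
          = (\<integral>\<omega>. gibbs_avg2 K N B lam t u \<omega> (\<lambda>x1 x2. if overlap K x1 x2 = a then 1 else 0) \<partial>data_space K N)"
    using nishi[OF assms(6), of K N B lam t "\<lambda>x. if magn K x = a then 1 else 0"]
    by (simp add: magn_mulK)
next
  show "(\<integral>\<omega>. gibbs_avg1 K N B lam t u \<omega> (magn K) \<partial>data_space K N)
          = (\<integral>\<omega>. gibbs_avg2 K N B lam t u \<omega> (overlap K) \<partial>data_space K N)"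
    using nishi[OF assms(6), of K N B lam t "magn K"]
    by (simp add: magn_mulK)
qed

end
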